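(* Let $\Gamma$ be a connected, undirected graph without loops on $n$ nodes with Laplacian $\mathbf L=\mathbf K-\mathbf A$, and let $\phi_1,\dots,\phi_n$ be an orthonormal basis of eigenvectors of $\mathbf L$ with $\mathbf L\phi_i=\mu_i\phi_i$. Let $$\mathbf G=\begin{bmatrix}\mathbf 0&\mathbf I\\-\mathbf I&-\mathbf L\end{bmatrix},\qquad \mathbf U=\mathbf G(\mathbf G^T\mathbf G)^{-1/2},$$ and set $\lambda_i^{P+}=\tfrac12\big[\sqrt{\mu_i^2+4}+\mu_i\big]$. Then $$\mathbf U=\begin{bmatrix}\mathcal A&\mathcal B\\-\mathcal B&\mathcal A\end{bmatrix},\qquad \mathcal A=\sum_{i=1}^n\frac{1-(\lambda_i^{P+})^2}{1+(\lambda_i^{P+})^2}\phi_i\phi_i^T,\quad \mathcal B=\sum_{i=1}^n\frac{2\lambda_i^{P+}}{1+(\lambda_i^{P+})^2}\phi_i\phi_i^T.$$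
   Context: $\mathbf A$ is the adjacency matrix, $\mathbf K$ the diagonal degree matrix, $\mathbf I,\mathbf 0$ the $n\times n$ identity and zero matrices; $(\mathbf G^T\mathbf G)^{-1/2}$ is the inverse of the positive definite square root of $\mathbf G^T\mathbf G$, so $\mathbf U$ is the orthogonal factor in the polar decomposition of $\mathbf G$. *)

theory Defs
  imports "Jordan_Normal_Form.Matrix"
begin

definition adjacency_matrix :: "nat \<Rightarrow> real mat \<Rightarrow> bool" where
  "adjacency_matrix n A \<longleftrightarrow> A \<in> carrier_mat n n \<and>
     (\<forall>i<n. \<forall>j<n. A $$ (i,j) \<in> {0,1} \<and> A $$ (i,j) = A $$ (j,i)) \<and>
     (\<forall>i<n. A $$ (i,i) = 0)"

definition graph_connected :: "nat \<Rightarrow> real mat \<Rightarrow> bool" where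
  "graph_connected n A \<longleftrightarrow>
     (\<forall>i<n. \<forall>j<n. (i,j) \<in> {(a,b). a < n \<and> b < n \<and> A $$ (a,b) = 1}\<^sup>*)"

definition degree_matrix :: "nat \<Rightarrow> real mat \<Rightarrow> real mat" where
  "degree_matrix n A = mat_diag n (\<lambda>i. \<Sum>k<n. A $$ (i,k))"

definition laplacian :: "nat \<Rightarrow> real mat \<Rightarrow> real mat" where
  "laplacian n A = degree_matrix n A - A"

definition mat_inv :: "real mat \<Rightarrow> real mat" where
  "mat_inv M = (THE B. B \<in> carrier_mat (dim_row M) (dim_row M) \<and> M * B = 1\<^sub>m (dim_row M)
                  \<and> B * M = 1\<^sub>m (dim_row M))"

definition pos_def_mat :: "nat \<Rightarrow> real mat \<Rightarrow> bool" where
  "pos_def_mat n S \<longleftrightarrow> S \<in> carrier_mat n n \<and> transpose_mat S = S \<and>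
     (\<forall>x \<in> carrier_vec n. x \<noteq> 0\<^sub>v n \<longrightarrow> x \<bullet> (S *\<^sub>v x) > 0)"

definition pd_sqrt :: "real mat \<Rightarrow> real mat" where
  "pd_sqrt M = (THE S. pos_def_mat (dim_row M) S \<and> S * S = M)"

text \<open>Entries of the matrix  sum_{i<n} c_i phi_i phi_i^T.\<close>
definition outer_sum :: "nat \<Rightarrow> (nat \<Rightarrow> real) \<Rightarrow> (nat \<Rightarrow> real vec) \<Rightarrow> real mat" where
  "outer_sum n c phi = mat n n (\<lambda>(j,k). \<Sum>i<n. c i * ((phi i) $ j * (phi i) $ k))"

end

theory Submission
  imports Defs "Jordan_Normal_Form.Determinant"
begin

lemma alg0:
  fixes l m a b t ti li :: real
  assumes "t = 1 + l*l" "t * ti = 1" "l * li = 1" "m * l = l*l - 1" "a * t = 1 - l*l" "b * t = 2*l"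
  shows "b * (b - a * m) - a^2 = 1" "a^2 + b^2 = 1" "- (a * b) - a * (b - a * m) = m"
    "a^2 + (b - a * m)^2 = 1 + m^2" "- a - m * b = a"
  using assms by (Groebner_Basis.algebra)+

lemma alg:
  fixes l m a b c :: real
  assumes l: "l > 0" and m: "m = (l*l - 1) / l"
    and a: "a = (1-l^2)/(1+l^2)" and b: "b = 2*l/(1+l^2)" and c: "c = b - a * m"
  shows "b * c - a^2 = 1" "a^2 + b^2 = 1" "- (a * b) - a * c = m"
    "a^2 + c^2 = 1 + m^2" "- a - m * b = a"
proof -
  have "l * l \<ge> 0" by simp
  then have d: "1 + l * l \<noteq> 0" "l \<noteq> 0" using l by linarith+
  have h: "(1 + l*l) * (1/(1+l*l)) = 1" "l * (1/l) = 1" "m * l = l*l - 1" "a * (1 + l*l) = 1 - l*l" "b * (1+l*l) = 2*l"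
    using d by (auto simp: m a b power2_eq_square)
  note r = alg0[OF refl h]
  show "b * c - a^2 = 1" unfolding c by (rule r(1))
  show "a^2 + b^2 = 1" by (rule r(2))
  show "- (a * b) - a * c = m" unfolding c by (rule r(3))
  show "a^2 + c^2 = 1 + m^2" unfolding c by (rule r(4))
  show "- a - m * b = a" by (rule r(5))
qed

lemma lam:
  fixes m :: real
  defines "l \<equiv> (sqrt (m\<^sup>2 + 4) + m) / 2"
  shows "l > 0" "m = (l*l - 1) / l"
proof -
  have s: "sqrt (m\<^sup>2 + 4) > \<bar>m\<bar>"
    by (rule real_less_rsqrt) (simp add: power2_eq_square)
  moreover have "- m \<le> \<bar>m\<bar>" by simp
  ultimately have "sqrt (m\<^sup>2 + 4) + m > 0" by linarith
  then show "l > 0" unfolding l_def by simp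
  have "(sqrt (m\<^sup>2 + 4))^2 = m^2 + 4" by simp
  then have "l * l - m * l = 1" unfolding l_def by (simp add: field_simps power2_eq_square)
  then show "m = (l*l - 1) / l" using \<open>l > 0\<close> by (simp add: field_simps)
qed


lemma pd_quad:
  assumes "pos_def_mat m X" "D \<in> carrier_mat m m" "k < m"
  shows "(\<Sum>i<m. \<Sum>j<m. D $$ (i,k) * X $$ (i,j) * D $$ (j,k)) \<ge> 0"
    and "col D k \<noteq> 0\<^sub>v m \<Longrightarrow> (\<Sum>i<m. \<Sum>j<m. D $$ (i,k) * X $$ (i,j) * D $$ (j,k)) > 0"
proof -
  have X: "X \<in> carrier_mat m m" using assms(1) by (simp add: pos_def_mat_def)
  have eq: "col D k \<bullet> (X *\<^sub>v col D k) = (\<Sum>i<m. \<Sum>j<m. D $$ (i,k) * X $$ (i,j) * D $$ (j,k))"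
    using X assms(2,3) by (simp add: scalar_prod_def lessThan_atLeast0 sum_distrib_left mult_ac)
  have c: "col D k \<in> carrier_vec m" using assms(2,3) by simp
  show "col D k \<noteq> 0\<^sub>v m \<Longrightarrow> (\<Sum>i<m. \<Sum>j<m. D $$ (i,k) * X $$ (i,j) * D $$ (j,k)) > 0"
    using assms(1) c eq unfolding pos_def_mat_def by auto
  show "(\<Sum>i<m. \<Sum>j<m. D $$ (i,k) * X $$ (i,j) * D $$ (j,k)) \<ge> 0"
  proof (cases "col D k = 0\<^sub>v m")
    case True
    then have "\<forall>i<m. D $$ (i,k) = 0" using assms(2,3)
      by (metis carrier_matD(1) col_def dim_vec index_vec index_zero_vec(1))
    then show ?thesis by simp
  next
    case False
    then show ?thesis using assms(1) c eq unfolding pos_def_mat_def by (metis less_le)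
  qed
qed

lemma pd_unique:
  assumes S: "pos_def_mat m S" and T: "pos_def_mat m T" and ST: "S * S = T * T"
  shows "S = T"
proof (rule ccontr)
  assume ne: "S \<noteq> T"
  have Sc: "S \<in> carrier_mat m m" and Tc: "T \<in> carrier_mat m m"
    and Ss: "transpose_mat S = S" and Ts: "transpose_mat T = T"
    using S T by (auto simp: pos_def_mat_def)
  define D where "D = S - T"
  have Dc: "D \<in> carrier_mat m m" using Sc Tc by (simp add: D_def minus_carrier_mat)
  have Sij: "S $$ (i,j) = S $$ (j,i)" if "i < m" "j < m" for i j
    using Ss that Sc by (metis carrier_matD index_transpose_mat(1))
  have Tij: "T $$ (i,j) = T $$ (j,i)" if "i < m" "j < m" for i j
    using Ts that Tc by (metis carrier_matD index_transpose_mat(1))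
  have Dij: "D $$ (i,j) = D $$ (j,i)" if "i < m" "j < m" for i j
    using that Sc Tc Sij Tij by (simp add: D_def)
  have sylv: "(\<Sum>j<m. S $$ (i,j) * D $$ (j,k) + D $$ (i,j) * T $$ (j,k)) = 0" if "i < m" "k < m" for i k
  proof -
    have "(S*S) $$ (i,k) = (T*T) $$ (i,k)" using ST by simp
    then have "(\<Sum>j<m. S $$ (i,j) * S $$ (j,k)) = (\<Sum>j<m. T $$ (i,j) * T $$ (j,k))"
      using that Sc Tc by (simp add: scalar_prod_def lessThan_atLeast0)
    then show ?thesis using that Sc Tc
      by (simp add: D_def algebra_simps sum.distrib sum_subtractf)
  qed
  define QS where "QS = (\<Sum>k<m. \<Sum>i<m. \<Sum>j<m. D $$ (i,k) * S $$ (i,j) * D $$ (j,k))"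
  define QT where "QT = (\<Sum>k<m. \<Sum>i<m. \<Sum>j<m. D $$ (i,k) * T $$ (i,j) * D $$ (j,k))"
  have "0 = (\<Sum>k<m. \<Sum>i<m. D $$ (i,k) * (\<Sum>j<m. S $$ (i,j) * D $$ (j,k) + D $$ (i,j) * T $$ (j,k)))"
    by (simp add: sylv)
  also have "\<dots> = QS + (\<Sum>k<m. \<Sum>i<m. \<Sum>j<m. D $$ (i,k) * D $$ (i,j) * T $$ (j,k))"
    by (simp add: QS_def sum_distrib_left sum.distrib algebra_simps)
  also have "(\<Sum>k<m. \<Sum>i<m. \<Sum>j<m. D $$ (i,k) * D $$ (i,j) * T $$ (j,k))
      = (\<Sum>k<m. \<Sum>i<m. \<Sum>j<m. D $$ (j,i) * T $$ (j,k) * D $$ (k,i))"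
    by (intro sum.cong refl) (simp add: Dij)
  also have "\<dots> = (\<Sum>i<m. \<Sum>k<m. \<Sum>j<m. D $$ (j,i) * T $$ (j,k) * D $$ (k,i))"
    by (rule sum.swap)
  also have "\<dots> = (\<Sum>i<m. \<Sum>j<m. \<Sum>k<m. D $$ (j,i) * T $$ (j,k) * D $$ (k,i))"
    by (rule sum.cong[OF refl], rule sum.swap)
  also have "\<dots> = QT" by (simp add: QT_def)
  finally have sum0: "QS + QT = 0" by simp
  have QSge: "QS \<ge> 0" unfolding QS_def by (rule sum_nonneg) (use pd_quad(1)[OF S Dc] in auto)
  have QTge: "QT \<ge> 0" unfolding QT_def by (rule sum_nonneg) (use pd_quad(1)[OF T Dc] in auto)
  have "D \<noteq> 0\<^sub>m m m"
  proof
    assume "D = 0\<^sub>m m m"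
    then have "S $$ (i,j) = T $$ (i,j)" if "i < m" "j < m" for i j
      using Sc Tc that unfolding D_def by (metis carrier_matD index_minus_mat(1) index_zero_mat(1) eq_iff_diff_eq_0)
    then have "S = T" using Sc Tc by (intro eq_matI) auto
    with ne show False by simp
  qed
  have "\<exists>k<m. col D k \<noteq> 0\<^sub>v m"
  proof (rule ccontr)
    assume "\<not> (\<exists>k<m. col D k \<noteq> 0\<^sub>v m)"
    then have z: "\<forall>k<m. col D k = 0\<^sub>v m" by auto
    have "D $$ (i,k) = 0" if "i < m" "k < m" for i k
    proof -
      have "col D k $ i = 0" using z that by simp
      then show ?thesis using that Dc by (metis carrier_matD index_col)
    qed
    then have "D = 0\<^sub>m m m" using Dc by (intro eq_matI) (auto simp: carrier_matD)
    with \<open>D \<noteq> 0\<^sub>m m m\<close> show False by simp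
  qed
  then obtain k where k: "k < m" "col D k \<noteq> 0\<^sub>v m" by blast
  have "QS > 0" unfolding QS_def
    by (rule sum_pos2[of _ k]) (use pd_quad[OF S Dc] k in auto)
  with sum0 QTge show False by simp
qed



lemma sum_split_nn: fixes g :: "nat \<Rightarrow> real" shows "(\<Sum>r<n+n. g r) = (\<Sum>r<n. g r) + (\<Sum>r<n. g (n + r))"
proof -
  have "(\<Sum>r<n+n. g r) = (\<Sum>r\<in>{0..<n}. g r) + (\<Sum>r\<in>{n..<n+n}. g r)"
    by (simp add: lessThan_atLeast0 sum.atLeastLessThan_concat)
  also have "(\<Sum>r\<in>{n..<n+n}. g r) = (\<Sum>r\<in>{0..<n}. g (r + n))"
    using sum.shift_bounds_nat_ivl[of g 0 n n] by simp
  finally show ?thesis by (simp add: lessThan_atLeast0 add.commute)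
qed

locale ortho =
  fixes n :: nat and phi :: "nat \<Rightarrow> real vec"
  assumes car: "\<forall>i<n. phi i \<in> carrier_vec n"
    and orth: "\<forall>i<n. \<forall>j<n. phi i \<bullet> phi j = (if i = j then 1 else 0)"
begin

abbreviation M where "M f \<equiv> outer_sum n f phi"

lemma M_carrier[simp]: "M f \<in> carrier_mat n n"
  and M_dim[simp]: "dim_row (M f) = n" "dim_col (M f) = n"
  by (auto simp: outer_sum_def)

lemma M_index[simp]: "j < n \<Longrightarrow> k < n \<Longrightarrow> M f $$ (j,k) = (\<Sum>i<n. f i * (phi i $ j * phi i $ k))"
  by (simp add: outer_sum_def)

lemma dot_sum: "i < n \<Longrightarrow> m < n \<Longrightarrow> (\<Sum>l<n. phi i $ l * phi m $ l) = (if i = m then 1 else 0)"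
proof -
  assume a: "i < n" "m < n"
  then have "phi i \<bullet> phi m = (if i = m then 1 else 0)" "dim_vec (phi m) = n" using orth car by auto
  then show ?thesis by (simp add: scalar_prod_def lessThan_atLeast0)
qed

lemma M_mult: "M f * M g = M (\<lambda>i. f i * g i)"
proof (rule eq_matI)
  fix j k assume j: "j < dim_row (M (\<lambda>i. f i * g i))" and k: "k < dim_col (M (\<lambda>i. f i * g i))"
  then have jk: "j < n" "k < n" by auto
  have "(M f * M g) $$ (j,k) = (\<Sum>l<n. M f $$ (j,l) * M g $$ (l,k))"
    using jk by (simp add: scalar_prod_def lessThan_atLeast0)
  also have "\<dots> = (\<Sum>l<n. (\<Sum>i<n. f i * (phi i $ j * phi i $ l)) * (\<Sum>m<n. g m * (phi m $ l * phi m $ k)))"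
    using jk by simp
  also have "\<dots> = (\<Sum>i<n. \<Sum>m<n. f i * g m * phi i $ j * phi m $ k * (\<Sum>l<n. phi i $ l * phi m $ l))"
  proof -
    have "(\<Sum>l<n. (\<Sum>i<n. f i * (phi i $ j * phi i $ l)) * (\<Sum>m<n. g m * (phi m $ l * phi m $ k)))
      = (\<Sum>l<n. \<Sum>i<n. \<Sum>m<n. f i * g m * phi i $ j * phi m $ k * (phi i $ l * phi m $ l))"
      by (rule sum.cong[OF refl], simp add: sum_product, rule sum.cong[OF refl], rule sum.cong[OF refl], simp add: mult_ac)
    also have "\<dots> = (\<Sum>i<n. \<Sum>l<n. \<Sum>m<n. f i * g m * phi i $ j * phi m $ k * (phi i $ l * phi m $ l))"
      by (rule sum.swap)
    also have "\<dots> = (\<Sum>i<n. \<Sum>m<n. \<Sum>l<n. f i * g m * phi i $ j * phi m $ k * (phi i $ l * phi m $ l))"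
      by (rule sum.cong[OF refl], rule sum.swap)
    also have "\<dots> = (\<Sum>i<n. \<Sum>m<n. f i * g m * phi i $ j * phi m $ k * (\<Sum>l<n. phi i $ l * phi m $ l))"
      by (simp add: sum_distrib_left)
    finally show ?thesis .
  qed
  also have "\<dots> = (\<Sum>i<n. f i * g i * phi i $ j * phi i $ k)"
    by (simp add: dot_sum if_distrib cong: if_cong)
  also have "\<dots> = M (\<lambda>i. f i * g i) $$ (j,k)" using jk by (simp add: mult_ac)
  finally show "(M f * M g) $$ (j,k) = M (\<lambda>i. f i * g i) $$ (j,k)" .
qed auto


lemma M_cong: "(\<And>i. i < n \<Longrightarrow> f i = g i) \<Longrightarrow> M f = M g"
  unfolding outer_sum_def by (intro cong_mat refl) (auto intro!: sum.cong)

lemma M_plus: "M f + M g = M (\<lambda>i. f i + g i)"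
  by (rule eq_matI) (auto simp: sum.distrib algebra_simps)

lemma M_uminus: "- M f = M (\<lambda>i. - f i)"
  by (rule eq_matI) (auto simp: sum_negf)

lemma M_zero: "M (\<lambda>i. 0) = 0\<^sub>m n n"
  by (rule eq_matI) auto

definition P where "P = mat n n (\<lambda>(j,i). phi i $ j)"

lemma complete: "j < n \<Longrightarrow> k < n \<Longrightarrow> (\<Sum>i<n. phi i $ j * phi i $ k) = (if j = k then 1 else 0)"
proof -
  assume jk: "j < n" "k < n"
  have Pc: "P \<in> carrier_mat n n" "transpose_mat P \<in> carrier_mat n n" by (auto simp: P_def)
  have "transpose_mat P * P = 1\<^sub>m n"
  proof (rule eq_matI)
    fix i m assume "i < dim_row (1\<^sub>m n)" "m < dim_col (1\<^sub>m n)"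
    then have im: "i < n" "m < n" by auto
    have "(transpose_mat P * P) $$ (i,m) = (\<Sum>l<n. phi i $ l * phi m $ l)"
      using im by (simp add: P_def scalar_prod_def lessThan_atLeast0)
    then show "(transpose_mat P * P) $$ (i,m) = 1\<^sub>m n $$ (i,m)" using im dot_sum by simp
  qed (auto simp: P_def)
  then have "P * transpose_mat P = 1\<^sub>m n" using mat_mult_left_right_inverse Pc by blast
  then have "(P * transpose_mat P) $$ (j,k) = (if j = k then 1 else 0)" using jk by simp
  moreover have "(P * transpose_mat P) $$ (j,k) = (\<Sum>i<n. phi i $ j * phi i $ k)"
    using jk by (simp add: P_def scalar_prod_def lessThan_atLeast0)
  ultimately show ?thesis by simp
qed

lemma M_one: "M (\<lambda>i. 1) = 1\<^sub>m n"
  by (rule eq_matI) (auto simp: complete)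

lemma M_eig:
  assumes L: "L \<in> carrier_mat n n" and ev: "\<forall>i<n. L *\<^sub>v phi i = mu i \<cdot>\<^sub>v phi i"
  shows "L = M mu"
proof (rule eq_matI)
  fix j k assume "j < dim_row (M mu)" "k < dim_col (M mu)"
  then have jk: "j < n" "k < n" by auto
  have "L $$ (j,k) = (\<Sum>l<n. L $$ (j,l) * (if l = k then 1 else 0))"
    using jk by (simp add: if_distrib cong: if_cong)
  also have "\<dots> = (\<Sum>l<n. L $$ (j,l) * (\<Sum>i<n. phi i $ l * phi i $ k))"
    by (rule sum.cong) (auto simp: complete jk)
  also have "\<dots> = (\<Sum>l<n. \<Sum>i<n. L $$ (j,l) * phi i $ l * phi i $ k)"
    by (simp add: sum_distrib_left mult_ac)
  also have "\<dots> = (\<Sum>i<n. \<Sum>l<n. L $$ (j,l) * phi i $ l * phi i $ k)"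
    by (rule sum.swap)
  also have "\<dots> = (\<Sum>i<n. (L *\<^sub>v phi i) $ j * phi i $ k)"
  proof (rule sum.cong[OF refl])
    fix i assume i: "i \<in> {..<n}"
    then have "dim_vec (phi i) = n" using car by auto
    then show "(\<Sum>l<n. L $$ (j,l) * phi i $ l * phi i $ k) = (L *\<^sub>v phi i) $ j * phi i $ k"
      using jk L by (simp add: scalar_prod_def lessThan_atLeast0 sum_distrib_right)
  qed
  also have "\<dots> = (\<Sum>i<n. mu i * (phi i $ j * phi i $ k))"
  proof (rule sum.cong[OF refl])
    fix i assume i: "i \<in> {..<n}"
    then have "dim_vec (phi i) = n" "L *\<^sub>v phi i = mu i \<cdot>\<^sub>v phi i" using car ev by auto
    then show "(L *\<^sub>v phi i) $ j * phi i $ k = mu i * (phi i $ j * phi i $ k)"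
      using jk by simp
  qed
  finally show "L $$ (j,k) = M mu $$ (j,k)" using jk by simp
qed (use L in auto)


definition Bk where "Bk f1 f2 f3 f4 = four_block_mat (M f1) (M f2) (M f3) (M f4)"

lemma Bk_carrier[simp]: "Bk f1 f2 f3 f4 \<in> carrier_mat (n+n) (n+n)"
  by (simp add: Bk_def)

lemma Bk_dims[simp]: "dim_row (Bk f1 f2 f3 f4) = n+n" "dim_col (Bk f1 f2 f3 f4) = n+n"
  by (simp_all add: Bk_def)

lemma Bk_mult: "Bk f1 f2 f3 f4 * Bk g1 g2 g3 g4 =
  Bk (\<lambda>i. f1 i * g1 i + f2 i * g3 i) (\<lambda>i. f1 i * g2 i + f2 i * g4 i)
     (\<lambda>i. f3 i * g1 i + f4 i * g3 i) (\<lambda>i. f3 i * g2 i + f4 i * g4 i)"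
  unfolding Bk_def
  by (subst mult_four_block_mat[of _ n n _ n _ n _ _ n _ n]) (auto simp: M_mult M_plus)

lemma Bk_transpose: "transpose_mat (Bk f1 f2 f3 f4) = Bk f1 f3 f2 f4"
proof -
  have t: "transpose_mat (M f) = M f" for f by (rule eq_matI) (auto simp: mult_ac)
  show ?thesis unfolding Bk_def by (subst transpose_four_block_mat[of _ n n _ n _ n]) (auto simp: t)
qed

lemma Bk_cong: "(\<And>i. i < n \<Longrightarrow> f1 i = g1 i) \<Longrightarrow> (\<And>i. i < n \<Longrightarrow> f2 i = g2 i) \<Longrightarrow>
  (\<And>i. i < n \<Longrightarrow> f3 i = g3 i) \<Longrightarrow> (\<And>i. i < n \<Longrightarrow> f4 i = g4 i) \<Longrightarrow> Bk f1 f2 f3 f4 = Bk g1 g2 g3 g4"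
  unfolding Bk_def by (metis M_cong)

lemma Bk_cong2: "(\<And>i. f1 i = g1 i) \<Longrightarrow> (\<And>i. f2 i = g2 i) \<Longrightarrow>
  (\<And>i. f3 i = g3 i) \<Longrightarrow> (\<And>i. f4 i = g4 i) \<Longrightarrow> Bk f1 f2 f3 f4 = Bk g1 g2 g3 g4"
  by (rule Bk_cong) auto

lemma Bk_one: "Bk (\<lambda>i. 1) (\<lambda>i. 0) (\<lambda>i. 0) (\<lambda>i. 1) = 1\<^sub>m (n+n)"
  unfolding Bk_def M_one M_zero by simp

lemma bilin: "(\<Sum>r<n. \<Sum>s<n. y r * (\<Sum>i<n. f i * (phi i $ r * phi i $ s)) * z s)
   = (\<Sum>i<n. f i * (\<Sum>r<n. phi i $ r * y r) * (\<Sum>s<n. phi i $ s * z s))"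
proof -
  have "(\<Sum>r<n. \<Sum>s<n. y r * (\<Sum>i<n. f i * (phi i $ r * phi i $ s)) * z s)
     = (\<Sum>r<n. \<Sum>s<n. \<Sum>i<n. f i * (phi i $ r * y r) * (phi i $ s * z s))"
    by (simp add: sum_distrib_left sum_distrib_right mult_ac)
  also have "\<dots> = (\<Sum>r<n. \<Sum>i<n. \<Sum>s<n. f i * (phi i $ r * y r) * (phi i $ s * z s))"
    by (rule sum.cong[OF refl], rule sum.swap)
  also have "\<dots> = (\<Sum>i<n. \<Sum>r<n. \<Sum>s<n. f i * (phi i $ r * y r) * (phi i $ s * z s))"
    by (rule sum.swap)
  also have "\<dots> = (\<Sum>i<n. f i * (\<Sum>r<n. phi i $ r * y r) * (\<Sum>s<n. phi i $ s * z s))"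
    by (simp add: sum_distrib_left sum_distrib_right mult_ac)
  finally show ?thesis .
qed

lemma Bk_quad:
  assumes x: "x \<in> carrier_vec (n+n)"
  shows "x \<bullet> (Bk f1 f2 f3 f4 *\<^sub>v x) = (\<Sum>i<n.
     f1 i * (\<Sum>r<n. phi i $ r * x $ r) * (\<Sum>s<n. phi i $ s * x $ s)
   + f2 i * (\<Sum>r<n. phi i $ r * x $ r) * (\<Sum>s<n. phi i $ s * x $ (n+s))
   + f3 i * (\<Sum>r<n. phi i $ r * x $ (n+r)) * (\<Sum>s<n. phi i $ s * x $ s)
   + f4 i * (\<Sum>r<n. phi i $ r * x $ (n+r)) * (\<Sum>s<n. phi i $ s * x $ (n+s)))"
proof -
  let ?B = "Bk f1 f2 f3 f4"
  have "x \<bullet> (?B *\<^sub>v x) = (\<Sum>r<n+n. x $ r * (?B *\<^sub>v x) $ r)"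
    unfolding scalar_prod_def by (simp only: dim_mult_mat_vec Bk_dims lessThan_atLeast0)
  also have "\<dots> = (\<Sum>r<n+n. x $ r * (\<Sum>s<n+n. ?B $$ (r,s) * x $ s))"
  proof (intro sum.cong refl arg_cong2[where f="(*)"])
    fix r assume r: "r \<in> {..<n+n}"
    have Bc: "?B \<in> carrier_mat (n+n) (n+n)" by simp
    show "(?B *\<^sub>v x) $ r = (\<Sum>s<n+n. ?B $$ (r,s) * x $ s)"
      using r x Bc by (auto simp: scalar_prod_def lessThan_atLeast0 intro!: sum.cong)
  qed
  also have "\<dots> = (\<Sum>r<n+n. \<Sum>s<n+n. x $ r * ?B $$ (r,s) * x $ s)"
    by (simp add: sum_distrib_left mult_ac)
  also have "\<dots> = (\<Sum>r<n. \<Sum>s<n. x $ r * M f1 $$ (r,s) * x $ s)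
     + (\<Sum>r<n. \<Sum>s<n. x $ r * M f2 $$ (r,s) * x $ (n+s))
     + (\<Sum>r<n. \<Sum>s<n. x $ (n+r) * M f3 $$ (r,s) * x $ s)
     + (\<Sum>r<n. \<Sum>s<n. x $ (n+r) * M f4 $$ (r,s) * x $ (n+s))"
    by (simp add: sum_split_nn sum.distrib Bk_def)
  also have "\<dots> = (\<Sum>i<n. f1 i * (\<Sum>r<n. phi i $ r * x $ r) * (\<Sum>s<n. phi i $ s * x $ s))
    + (\<Sum>i<n. f2 i * (\<Sum>r<n. phi i $ r * x $ r) * (\<Sum>s<n. phi i $ s * x $ (n+s)))
    + (\<Sum>i<n. f3 i * (\<Sum>r<n. phi i $ r * x $ (n+r)) * (\<Sum>s<n. phi i $ s * x $ s))
    + (\<Sum>i<n. f4 i * (\<Sum>r<n. phi i $ r * x $ (n+r)) * (\<Sum>s<n. phi i $ s * x $ (n+s)))"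
    by (simp only: bilin[symmetric]) (intro arg_cong2[where f="(+)"] sum.cong refl; simp)
  finally show ?thesis by (simp add: sum.distrib)
qed

lemma coords_zero:
  assumes "\<forall>i<n. (\<Sum>r<n. phi i $ r * y r) = 0" "j < n"
  shows "y j = 0"
proof -
  have "(\<Sum>r<n. (if j = r then 1 else 0) * y r) = (\<Sum>r<n. if j = r then y r else 0)"
    by (intro sum.cong) auto
  then have "y j = (\<Sum>r<n. (if j = r then 1 else 0) * y r)" using assms(2) by simp
  also have "\<dots> = (\<Sum>r<n. \<Sum>i<n. phi i $ j * phi i $ r * y r)"
    using assms(2) by (intro sum.cong refl) (simp add: complete[symmetric] sum_distrib_right)
  also have "\<dots> = (\<Sum>i<n. phi i $ j * (\<Sum>r<n. phi i $ r * y r))"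
    by (subst sum.swap) (simp add: sum_distrib_left mult_ac)
  also have "\<dots> = 0" using assms(1) by simp
  finally show ?thesis .
qed

end

lemma quad_pos:
  fixes b a c p q :: real
  assumes "b > 0" "b * c - a^2 = 1"
  shows "b*p*p + (-a)*p*q + (-a)*q*p + c*q*q \<ge> 0"
    and "p \<noteq> 0 \<or> q \<noteq> 0 \<Longrightarrow> b*p*p + (-a)*p*q + (-a)*q*p + c*q*q > 0"
proof -
  have e0: "b * (b*p*p + (-a)*p*q + (-a)*q*p + c*q*q) - ((b*p - a*q)^2 + q^2) = (b*c - a^2 - 1) * q^2"
    by (simp add: power2_eq_square algebra_simps)
  have e: "b * (b*p*p + (-a)*p*q + (-a)*q*p + c*q*q) = (b*p - a*q)^2 + q^2"
    using e0 assms(2) by simp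
  have "b * (b*p*p + (-a)*p*q + (-a)*q*p + c*q*q) \<ge> 0" unfolding e by simp
  then show "b*p*p + (-a)*p*q + (-a)*q*p + c*q*q \<ge> 0" using assms(1) by (simp add: zero_le_mult_iff)
  assume pq: "p \<noteq> 0 \<or> q \<noteq> 0"
  have "(b*p - a*q)^2 + q^2 > 0"
  proof (cases "q = 0")
    case True then show ?thesis using pq assms(1) by simp
  next
    case False then show ?thesis by (simp add: add_nonneg_pos)
  qed
  then have "b * (b*p*p + (-a)*p*q + (-a)*q*p + c*q*q) > 0" unfolding e .
  then show "b*p*p + (-a)*p*q + (-a)*q*p + c*q*q > 0" using assms(1) by (simp add: zero_less_mult_iff)
qed

context ortho
begin

lemma Bk_posdef:
  assumes b: "\<And>i. i < n \<Longrightarrow> b i > 0" and det: "\<And>i. i < n \<Longrightarrow> b i * c i - (a i)^2 = 1"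
  shows "pos_def_mat (n+n) (Bk b (\<lambda>i. - a i) (\<lambda>i. - a i) c)"
  unfolding pos_def_mat_def
proof (intro conjI ballI impI)
  show "Bk b (\<lambda>i. - a i) (\<lambda>i. - a i) c \<in> carrier_mat (n + n) (n + n)" by simp
  show "transpose_mat (Bk b (\<lambda>i. - a i) (\<lambda>i. - a i) c) = Bk b (\<lambda>i. - a i) (\<lambda>i. - a i) c"
    by (simp add: Bk_transpose)
  fix x :: "real vec" assume x: "x \<in> carrier_vec (n+n)" and nz: "x \<noteq> 0\<^sub>v (n+n)"
  define p where "p i = (\<Sum>r<n. phi i $ r * x $ r)" for i
  define q where "q i = (\<Sum>r<n. phi i $ r * x $ (n+r))" for i
  have Q: "x \<bullet> (Bk b (\<lambda>i. - a i) (\<lambda>i. - a i) c *\<^sub>v x) =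
     (\<Sum>i<n. b i * p i * p i + (- a i) * p i * q i + (- a i) * q i * p i + c i * q i * q i)"
    unfolding Bk_quad[OF x] p_def q_def ..
  have "\<exists>i<n. p i \<noteq> 0 \<or> q i \<noteq> 0"
  proof (rule ccontr)
    assume "\<not> (\<exists>i<n. p i \<noteq> 0 \<or> q i \<noteq> 0)"
    then have pz: "\<forall>i<n. p i = 0" and qz: "\<forall>i<n. q i = 0" by auto
    have x1: "x $ j = 0" if "j < n" for j
      using coords_zero[of "\<lambda>r. x $ r" j] pz that unfolding p_def by auto
    have x2: "x $ (n + j) = 0" if "j < n" for j
      using coords_zero[of "\<lambda>r. x $ (n + r)" j] qz that unfolding q_def by auto
    have "x = 0\<^sub>v (n+n)"
    proof (rule eq_vecI)
      fix j assume "j < dim_vec (0\<^sub>v (n+n))"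
      then have j: "j < n + n" by simp
      show "x $ j = 0\<^sub>v (n+n) $ j"
      proof (cases "j < n")
        case True then show ?thesis using x1 j by simp
      next
        case False
        then have "j = n + (j - n)" "j - n < n" using j by auto
        then show ?thesis using x2[of "j - n"] j by simp
      qed
    qed (use x in simp)
    with nz show False by simp
  qed
  then obtain i where i: "i < n" "p i \<noteq> 0 \<or> q i \<noteq> 0" by blast
  have ge: "\<forall>j\<in>{..<n}. b j * p j * p j + (- a j) * p j * q j + (- a j) * q j * p j + c j * q j * q j \<ge> 0"
    using quad_pos(1)[OF b det] by blast
  have gt: "b i * p i * p i + (- a i) * p i * q i + (- a i) * q i * p i + c i * q i * q i > 0"
    using quad_pos(2)[OF b det] i by blast
  show "x \<bullet> (Bk b (\<lambda>i. - a i) (\<lambda>i. - a i) c *\<^sub>v x) > 0"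
    unfolding Q by (rule sum_pos2[of "{..<n}" i]) (use gt ge i in auto)
qed

end

lemma inv_unique:
  assumes S: "S \<in> carrier_mat m m" and V: "V \<in> carrier_mat m m"
    and SV: "S * V = 1\<^sub>m m" and VS: "V * S = 1\<^sub>m m"
  shows "mat_inv S = V"
  unfolding mat_inv_def
proof (rule the_equality)
  show "V \<in> carrier_mat (dim_row S) (dim_row S) \<and> S * V = 1\<^sub>m (dim_row S) \<and> V * S = 1\<^sub>m (dim_row S)"
    using assms by auto
  fix B assume B: "B \<in> carrier_mat (dim_row S) (dim_row S) \<and> S * B = 1\<^sub>m (dim_row S) \<and> B * S = 1\<^sub>m (dim_row S)"
  then have Bc: "B \<in> carrier_mat m m" and BS: "B * S = 1\<^sub>m m" using S by auto
  have "B = B * (S * V)" using Bc SV by simp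
  also have "\<dots> = (B * S) * V" using Bc S V by (simp add: assoc_mult_mat)
  also have "\<dots> = V" using BS V by simp
  finally show "B = V" .
qed

theorem proposition6:
  fixes n :: nat and A :: "real mat" and phi :: "nat \<Rightarrow> real vec" and mu :: "nat \<Rightarrow> real"
  assumes "n \<ge> 1"
    and "adjacency_matrix n A"
    and "graph_connected n A"
    and "\<forall>i<n. phi i \<in> carrier_vec n"
    and "\<forall>i<n. \<forall>j<n. phi i \<bullet> phi j = (if i = j then 1 else 0)"
    and "\<forall>i<n. laplacian n A *\<^sub>v phi i = mu i \<cdot>\<^sub>v phi i"
  shows "let L = laplacian n A;
             G = four_block_mat (0\<^sub>m n n) (1\<^sub>m n) (- 1\<^sub>m n) (- L);
             U = G * mat_inv (pd_sqrt (transpose_mat G * G));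
             lam = (\<lambda>i. (sqrt ((mu i)\<^sup>2 + 4) + mu i) / 2);
             \<A> = outer_sum n (\<lambda>i. (1 - (lam i)\<^sup>2) / (1 + (lam i)\<^sup>2)) phi;
             \<B> = outer_sum n (\<lambda>i. 2 * lam i / (1 + (lam i)\<^sup>2)) phi
         in U = four_block_mat \<A> \<B> (- \<B>) \<A>"
proof -
  interpret ortho n phi using assms(4,5) by unfold_locales
  have Ac: "A \<in> carrier_mat n n" using assms(2) by (simp add: adjacency_matrix_def)
  have Lc: "laplacian n A \<in> carrier_mat n n"
    using Ac by (simp add: laplacian_def minus_carrier_mat)
  have Leq: "laplacian n A = M mu" by (rule M_eig[OF Lc assms(6)])
  define lam where "lam = (\<lambda>i. (sqrt ((mu i)\<^sup>2 + 4) + mu i) / 2)"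
  define a where "a = (\<lambda>i. (1 - (lam i)\<^sup>2) / (1 + (lam i)\<^sup>2))"
  define b where "b = (\<lambda>i. 2 * lam i / (1 + (lam i)\<^sup>2))"
  define c where "c = (\<lambda>i. b i - a i * mu i)"
  have lp1: "lam i > 0" for i unfolding lam_def by (rule lam(1))
  have lp2: "mu i = (lam i * lam i - 1) / lam i" for i unfolding lam_def by (rule lam(2))
  have ai: "a i = (1 - (lam i)^2)/(1 + (lam i)^2)" for i by (simp only: a_def)
  have bi: "b i = 2 * lam i/(1 + (lam i)^2)" for i by (simp only: b_def)
  have ci: "c i = b i - a i * mu i" for i by (simp only: c_def)
  note al = alg[OF lp1 lp2 ai bi ci]
  have bpos: "b i > 0" for i
  proof -
    have "1 + (lam i)\<^sup>2 > 0" by (simp add: add_pos_nonneg)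
    then show ?thesis unfolding b_def using lp1[of i] by simp
  qed
  define G where "G = four_block_mat (0\<^sub>m n n) (1\<^sub>m n) (- 1\<^sub>m n) (- laplacian n A)"
  have Geq: "G = Bk (\<lambda>i. 0) (\<lambda>i. 1) (\<lambda>i. - 1) (\<lambda>i. - mu i)"
    unfolding G_def Bk_def Leq M_uminus[symmetric] M_one M_zero ..
  define S0 where "S0 = Bk b (\<lambda>i. - a i) (\<lambda>i. - a i) c"
  define V where "V = Bk c a a b"
  have GtG: "transpose_mat G * G = S0 * S0"
    unfolding Geq S0_def Bk_transpose Bk_mult
    apply (rule Bk_cong2)
    subgoal for i by ((simp add: algebra_simps; fail) | (use al[of i] in \<open>Groebner_Basis.algebra\<close>))
    subgoal for i by ((simp add: algebra_simps; fail) | (use al[of i] in \<open>Groebner_Basis.algebra\<close>))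
    subgoal for i by ((simp add: algebra_simps; fail) | (use al[of i] in \<open>Groebner_Basis.algebra\<close>))
    subgoal for i by ((simp add: algebra_simps; fail) | (use al[of i] in \<open>Groebner_Basis.algebra\<close>))
    done
  have pd: "pos_def_mat (n+n) S0"
    unfolding S0_def by (rule Bk_posdef[OF bpos al(1)])
  have sq: "pd_sqrt (transpose_mat G * G) = S0"
    unfolding pd_sqrt_def
  proof (rule the_equality)
    have d: "dim_row (transpose_mat G * G) = n + n" unfolding Geq by simp
    show "pos_def_mat (dim_row (transpose_mat G * G)) S0 \<and> S0 * S0 = transpose_mat G * G"
      using pd GtG d by simp
    fix S assume "pos_def_mat (dim_row (transpose_mat G * G)) S \<and> S * S = transpose_mat G * G"
    then show "S = S0" using pd_unique[OF _ pd] GtG d by auto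
  qed
  have SV: "S0 * V = 1\<^sub>m (n+n)"
    unfolding S0_def V_def Bk_mult Bk_one[symmetric]
    apply (rule Bk_cong2)
    subgoal for i by ((simp add: algebra_simps; fail) | (use al[of i] in \<open>Groebner_Basis.algebra\<close>))
    subgoal for i by ((simp add: algebra_simps; fail) | (use al[of i] in \<open>Groebner_Basis.algebra\<close>))
    subgoal for i by ((simp add: algebra_simps; fail) | (use al[of i] in \<open>Groebner_Basis.algebra\<close>))
    subgoal for i by ((simp add: algebra_simps; fail) | (use al[of i] in \<open>Groebner_Basis.algebra\<close>))
    done
  have VS: "V * S0 = 1\<^sub>m (n+n)"
    unfolding S0_def V_def Bk_mult Bk_one[symmetric]
    apply (rule Bk_cong2)
    subgoal for i by ((simp add: algebra_simps; fail) | (use al[of i] in \<open>Groebner_Basis.algebra\<close>))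
    subgoal for i by ((simp add: algebra_simps; fail) | (use al[of i] in \<open>Groebner_Basis.algebra\<close>))
    subgoal for i by ((simp add: algebra_simps; fail) | (use al[of i] in \<open>Groebner_Basis.algebra\<close>))
    subgoal for i by ((simp add: algebra_simps; fail) | (use al[of i] in \<open>Groebner_Basis.algebra\<close>))
    done
  have inv: "mat_inv S0 = V"
    by (rule inv_unique[OF _ _ SV VS]) (auto simp: S0_def V_def)
  have U: "G * V = Bk a b (\<lambda>i. - b i) a"
    unfolding Geq V_def Bk_mult
    apply (rule Bk_cong2)
    subgoal for i by ((simp add: algebra_simps; fail) | (use al[of i] in \<open>Groebner_Basis.algebra\<close>))
    subgoal for i by ((simp add: algebra_simps; fail) | (use al[of i] in \<open>Groebner_Basis.algebra\<close>))
    subgoal for i by ((simp add: algebra_simps; fail) | (use al[of i] ci[of i] in \<open>Groebner_Basis.algebra\<close>))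
    subgoal for i by ((simp add: algebra_simps; fail) | (use al[of i] in \<open>Groebner_Basis.algebra\<close>))
    done
  have "G * mat_inv (pd_sqrt (transpose_mat G * G)) = four_block_mat (M a) (M b) (- M b) (M a)"
    unfolding sq inv U Bk_def M_uminus ..
  then show ?thesis unfolding Let_def G_def a_def b_def lam_def .
qed

end
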